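(* Let $\mathfrak g$ be a finite-dimensional complex simple Lie algebra with Cartan subalgebra $\mathfrak t$ and root system $\Phi_{\mathfrak g}$. Let $Q=\sum_{i=1}^pA_ix^i$ with $p\ge1$, $A_i\in\mathfrak t$, $A_p\ne0$; for $\alpha\in\Phi_{\mathfrak g}$ let $d_\alpha=\deg_x\bigl(\sum_i\alpha(A_i)x^i\bigr)$ (with $\deg_x(0)=0$) and for $i\in\{1,\dots,p\}$ let $$\mathbf B_i=\bigcap_{\alpha:\ d_\alpha<i}\operatorname{Ker}(\alpha)\cap\bigcap_{\alpha:\ d_\alpha=i}\bigl(\mathfrak t\setminus\operatorname{Ker}(\alpha)\bigr)\subset\mathfrak t,$$ so that $A_i\in\mathbf B_i$ and the pure local wild mapping class group satisfies $\Gamma_Q\simeq\prod_{i=1}^p\pi_1(\mathbf B_i,A_i)$. Then the number of indices $i\in\{1,\dots,p\}$ for which $\pi_1(\mathbf B_i,A_i)$ is nontrivial is at most $\operatorname{rk}(\mathfrak g)$.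
   Context: $\Gamma_Q=\pi_1(\mathbf B_Q,(A_1,\dots,A_p))$ where $\mathbf B_Q=\{(A_1',\dots,A_p')\in\mathfrak t^p:\deg_x(\sum_i\alpha(A_i')x^i)=d_\alpha\ \forall\alpha\in\Phi_{\mathfrak g}\}$; one has $\mathbf B_Q=\prod_i\mathbf B_i$. $\operatorname{rk}(\mathfrak g)=\dim\mathfrak t$. *)

theory Defs
  imports "HOL-Analysis.Analysis" "HOL-Computational_Algebra.Polynomial"
begin

text \<open>A finite-dimensional complex Lie algebra is modelled as complex^'n
  (any finite-dimensional complex vector space is isomorphic to such) with a bracket B.\<close>

definition lie_bracket :: "(complex^'n \<Rightarrow> complex^'n \<Rightarrow> complex^'n) \<Rightarrow> bool" where
  "lie_bracket B \<longleftrightarrow>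
     (\<forall>x y z. B (x + y) z = B x z + B y z) \<and>
     (\<forall>c x y. B (c *s x) y = c *s B x y) \<and>
     (\<forall>x. B x x = 0) \<and>
     (\<forall>x y z. B x (B y z) + B y (B z x) + B z (B x y) = 0)"

definition lie_ideal :: "(complex^'n \<Rightarrow> complex^'n \<Rightarrow> complex^'n) \<Rightarrow> (complex^'n) set \<Rightarrow> bool" where
  "lie_ideal B I \<longleftrightarrow> vec.subspace I \<and> (\<forall>x y. y \<in> I \<longrightarrow> B x y \<in> I)"

definition simple_lie_algebra :: "(complex^'n \<Rightarrow> complex^'n \<Rightarrow> complex^'n) \<Rightarrow> bool" where
  "simple_lie_algebra B \<longleftrightarrow> lie_bracket B \<and> (\<exists>x y. B x y \<noteq> 0) \<and>
     (\<forall>I. lie_ideal B I \<longrightarrow> I = {0} \<or> I = UNIV)"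

definition lie_subalgebra :: "(complex^'n \<Rightarrow> complex^'n \<Rightarrow> complex^'n) \<Rightarrow> (complex^'n) set \<Rightarrow> bool" where
  "lie_subalgebra B h \<longleftrightarrow> vec.subspace h \<and> (\<forall>x\<in>h. \<forall>y\<in>h. B x y \<in> h)"

primrec lcs :: "(complex^'n \<Rightarrow> complex^'n \<Rightarrow> complex^'n) \<Rightarrow> (complex^'n) set \<Rightarrow> nat \<Rightarrow> (complex^'n) set" where
  "lcs B h 0 = h"
| "lcs B h (Suc k) = vec.span {B x y | x y. x \<in> h \<and> y \<in> lcs B h k}"

definition cartan_subalgebra :: "(complex^'n \<Rightarrow> complex^'n \<Rightarrow> complex^'n) \<Rightarrow> (complex^'n) set \<Rightarrow> bool" where
  "cartan_subalgebra B h \<longleftrightarrow> lie_subalgebra B h \<and> (\<exists>k. lcs B h k = {0}) \<and>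
     {x. \<forall>y\<in>h. B x y \<in> h} = h"

text \<open>Roots: nonzero linear functionals on h (extended by 0 outside h) with nonzero root space.\<close>
definition lie_roots :: "(complex^'n \<Rightarrow> complex^'n \<Rightarrow> complex^'n) \<Rightarrow> (complex^'n) set \<Rightarrow> (complex^'n \<Rightarrow> complex) set" where
  "lie_roots B h = {\<alpha>. (\<forall>x\<in>h. \<forall>y\<in>h. \<alpha> (x + y) = \<alpha> x + \<alpha> y) \<and>
       (\<forall>c. \<forall>x\<in>h. \<alpha> (c *s x) = c * \<alpha> x) \<and>
       (\<forall>x. x \<notin> h \<longrightarrow> \<alpha> x = 0) \<and>
       (\<exists>x\<in>h. \<alpha> x \<noteq> 0) \<and>
       (\<exists>v. v \<noteq> 0 \<and> (\<forall>x\<in>h. B x v = \<alpha> x *s v))}"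

definition root_deg :: "(complex^'n \<Rightarrow> complex) \<Rightarrow> (nat \<Rightarrow> complex^'n) \<Rightarrow> nat \<Rightarrow> nat" where
  "root_deg \<alpha> A p = degree (\<Sum>i=1..p. monom (\<alpha> (A i)) i)"

definition Bstratum :: "(complex^'n) set \<Rightarrow> (complex^'n \<Rightarrow> complex) set \<Rightarrow> (nat \<Rightarrow> complex^'n) \<Rightarrow> nat \<Rightarrow> nat \<Rightarrow> (complex^'n) set" where
  "Bstratum h \<Phi> A p i = h \<inter> {x. \<forall>\<alpha>\<in>\<Phi>. root_deg \<alpha> A p < i \<longrightarrow> \<alpha> x = 0}
                          \<inter> {x. \<forall>\<alpha>\<in>\<Phi>. root_deg \<alpha> A p = i \<longrightarrow> \<alpha> x \<noteq> 0}"

definition trivial_pi1 :: "'a::real_normed_vector set \<Rightarrow> 'a \<Rightarrow> bool" where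
  "trivial_pi1 S a \<longleftrightarrow> (\<forall>g. path g \<and> path_image g \<subseteq> S \<and> pathstart g = a \<and> pathfinish g = a
      \<longrightarrow> homotopic_loops S g (linepath a a))"

end

theory Submission
  imports Defs
begin

lemma scaleR_vec_complex: "c *\<^sub>R (x::complex^'n) = (complex_of_real c :: complex) *s x"
  unfolding vec_eq_iff vector_scaleR_component vector_smult_component
  by (simp add: scaleR_conv_of_real)

lemma count_drops:
  fixes f :: "nat \<Rightarrow> nat"
  assumes "\<And>i. f (Suc i) \<le> f i"
  shows "card {i \<in> {1..p}. f (Suc i) < f i} + f (Suc p) \<le> f 1"
proof (induction p)
  case 0
  then show ?case by simp
next
  case (Suc p)
  have eq: "{i \<in> {1..Suc p}. f (Suc i) < f i} =
     {i \<in> {1..p}. f (Suc i) < f i} \<union> (if f (Suc (Suc p)) < f (Suc p) then {Suc p} else {})"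
    by (auto simp: le_Suc_eq)
  show ?case
  proof (cases "f (Suc (Suc p)) < f (Suc p)")
    case True
    have "card {i \<in> {1..Suc p}. f (Suc i) < f i} = card {i \<in> {1..p}. f (Suc i) < f i} + 1"
      using True unfolding eq by (simp add: card_insert_if)
    then show ?thesis using Suc True by simp
  next
    case False
    then show ?thesis using Suc assms[of "Suc p"] unfolding eq by simp
  qed
qed

lemma coeff_sum_monom:
  "coeff (\<Sum>j=1..p. monom (c j) j) i = (if i \<in> {1..p} then c i else (0::complex))"
  by (simp add: coeff_sum coeff_monom)

theorem corollary5p6:
  fixes B :: "complex^'n \<Rightarrow> complex^'n \<Rightarrow> complex^'n"
    and h :: "(complex^'n) set"
    and A :: "nat \<Rightarrow> complex^'n"
    and p :: nat
  assumes "simple_lie_algebra B"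
    and "cartan_subalgebra B h"
    and "p \<ge> 1"
    and "\<forall>i\<in>{1..p}. A i \<in> h"
    and "A p \<noteq> 0"
  shows "card {i \<in> {1..p}. \<not> trivial_pi1 (Bstratum h (lie_roots B h) A p i) (A i)} \<le> vec.dim h"
proof -
  define \<Phi> where "\<Phi> = lie_roots B h"
  define K where "K i = h \<inter> {x. \<forall>\<alpha>\<in>\<Phi>. root_deg \<alpha> A p < i \<longrightarrow> \<alpha> x = 0}" for i
  have hsub: "vec.subspace h" using assms(2) unfolding cartan_subalgebra_def lie_subalgebra_def by blast
  have lin: "\<alpha> (x + y) = \<alpha> x + \<alpha> y" "\<alpha> (c *s x) = c * \<alpha> x"
    if "\<alpha> \<in> \<Phi>" "x \<in> h" "y \<in> h" for \<alpha> x y c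
    using that unfolding \<Phi>_def lie_roots_def by auto
  have h0: "0 \<in> h" using hsub vec.subspace_0 by blast
  have a0: "\<alpha> 0 = 0" if "\<alpha> \<in> \<Phi>" for \<alpha>
    using lin(2)[OF that h0 h0, of 0] by simp
  have Ksub: "vec.subspace (K i)" for i
    unfolding vec.subspace_def K_def
    using hsub a0 by (auto simp: vec.subspace_def lin)
  have Krsub: "subspace (K i)" for i
    using Ksub[of i] unfolding vec.subspace_def subspace_def by (simp add: scaleR_vec_complex)
  have coeffA: "coeff (\<Sum>j=1..p. monom (\<alpha> (A j)) j) i = \<alpha> (A i)" if "i \<in> {1..p}" for \<alpha> :: "complex^'n \<Rightarrow> complex" and i
    using that coeff_sum_monom[of "\<lambda>j. \<alpha> (A j)" p i] by simp
  define T where "T = {i \<in> {1..p}. \<exists>\<alpha>\<in>\<Phi>. root_deg \<alpha> A p = i}"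
  have sub: "{i \<in> {1..p}. \<not> trivial_pi1 (Bstratum h \<Phi> A p i) (A i)} \<subseteq> T"
  proof
    fix i assume i: "i \<in> {i \<in> {1..p}. \<not> trivial_pi1 (Bstratum h \<Phi> A p i) (A i)}"
    show "i \<in> T"
    proof (rule ccontr)
      assume "i \<notin> T"
      then have "Bstratum h \<Phi> A p i = K i" using i unfolding T_def Bstratum_def K_def by auto
      then have sc: "simply_connected (Bstratum h \<Phi> A p i)"
        using Krsub convex_imp_simply_connected subspace_imp_convex by metis
      have "trivial_pi1 (Bstratum h \<Phi> A p i) (A i)"
        unfolding trivial_pi1_def
      proof (intro allI impI)
        fix g assume g: "path g \<and> path_image g \<subseteq> Bstratum h \<Phi> A p i \<and> pathstart g = A i \<and> pathfinish g = A i"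
        then have "A i \<in> Bstratum h \<Phi> A p i" using pathstart_in_path_image[of g] by (simp add: subset_iff)
        then show "homotopic_loops (Bstratum h \<Phi> A p i) g (linepath (A i) (A i))"
          using sc[unfolded simply_connected_eq_contractible_loop_any, rule_format, of g "A i"] g by simp
      qed
      then show False using i by simp
    qed
  qed
  define f where "f i = vec.dim (K i)" for i
  have Kmono: "K (Suc i) \<subseteq> K i" for i unfolding K_def by auto
  have fmono: "f (Suc i) \<le> f i" for i unfolding f_def by (rule vec.dim_subset[OF Kmono])
  have drop: "f (Suc i) < f i" if "i \<in> T" for i
  proof -
    from that obtain \<alpha> where i: "i \<in> {1..p}" and \<alpha>: "\<alpha> \<in> \<Phi>" "root_deg \<alpha> A p = i"
      unfolding T_def by auto
    have Ai: "A i \<in> h" using assms(4) i by auto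
    have "\<beta> (A i) = 0" if "\<beta> \<in> \<Phi>" "root_deg \<beta> A p < i" for \<beta>
    proof -
      have "coeff (\<Sum>j=1..p. monom (\<beta> (A j)) j) i = 0"
        using that(2) unfolding root_deg_def by (simp add: coeff_eq_0)
      then show ?thesis using coeffA[OF i] by simp
    qed
    then have inK: "A i \<in> K i" unfolding K_def using Ai by auto
    have "\<alpha> (A i) \<noteq> 0"
    proof
      assume z: "\<alpha> (A i) = 0"
      let ?q = "\<Sum>j=1..p. monom (\<alpha> (A j)) j"
      have "degree ?q = i" using \<alpha>(2) unfolding root_deg_def .
      then have "?q \<noteq> 0" using i by auto
      then have "coeff ?q (degree ?q) \<noteq> 0" by (rule leading_coeff_neq_0)
      then have "coeff ?q i \<noteq> 0" using \<open>degree ?q = i\<close> by argo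
      then show False using z coeffA[OF i, of \<alpha>] by simp
    qed
    then have "A i \<notin> K (Suc i)" unfolding K_def using \<alpha> by auto
    then have ps: "K (Suc i) \<subset> K i" using inK Kmono by blast
    have "vec.span (K (Suc i)) \<subset> vec.span (K i)"
      proof -
      have e: "vec.span (K j) = K j" for j using Ksub[of j] vec.span_eq_iff by blast
      show ?thesis using ps unfolding e .
    qed
    then show ?thesis unfolding f_def by (rule vec.dim_psubset)
  qed
  have fT: "finite T" unfolding T_def by simp
  have "card T \<le> card {i \<in> {1..p}. f (Suc i) < f i}"
    proof (rule card_mono)
    show "T \<subseteq> {i \<in> {1..p}. f (Suc i) < f i}"
    proof
      fix i assume "i \<in> T"
      then show "i \<in> {i \<in> {1..p}. f (Suc i) < f i}"
        using drop[of i] unfolding T_def by blast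
    qed
  qed (rule finite_subset[of _ "{1..p}"], auto)
  also have "\<dots> \<le> f 1" using count_drops[of f p, OF fmono] by linarith
  also have "f 1 \<le> vec.dim h" unfolding f_def K_def by (rule vec.dim_subset) auto
  finally have "card T \<le> vec.dim h" .
  moreover have "card {i \<in> {1..p}. \<not> trivial_pi1 (Bstratum h \<Phi> A p i) (A i)} \<le> card T"
    by (rule card_mono[OF fT sub])
  ultimately show ?thesis unfolding \<Phi>_def by simp
qed

end
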